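(* Let $V$ be an $n$-dimensional complex vector space with orthonormal basis $e_1,\ldots,e_n$ for a nondegenerate symmetric bilinear form, let $a_{ij}=e_i\wedge e_j\in\Lambda_2(V)$, and $A=(a_{ij})_{1\le i,j\le n}\in\operatorname{Mat}_{n,n}(\Lambda(\Lambda_2(V)))$. Then for $l\ge 1$ we have $\operatorname{tr}(A^l)=0$ unless $l\equiv 3\pmod 4$.
   Context: $\Lambda(\Lambda_2(V))$ is the exterior algebra on $\Lambda_2(V)$; its products are exterior products, and matrix products are taken with entries multiplied in the order written. *)

theory Defs
  imports Complex_Main "HOL-Library.Product_Lexorder"
begin

text \<open>Exterior algebra \<Lambda>(W) over the complex numbers on a vector space W with a
  basis indexed by pairs (i,j) with i < j (the basis e_i \<and> e_j of \<Lambda>_2(V)).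
  An element is given by its coefficients on the standard monomial basis
  w_S = w_{s_1} \<and> ... \<and> w_{s_k} (s_1 < ... < s_k in the lexicographic order),
  i.e. as a function from finite sets of generators to complex numbers.\<close>

type_synonym ext = "(nat \<times> nat) set \<Rightarrow> complex"

text \<open>Sign of w_S \<and> w_T = ext_sign S T * w_(S \<union> T) for disjoint S, T.\<close>
definition ext_sign :: "(nat \<times> nat) set \<Rightarrow> (nat \<times> nat) set \<Rightarrow> complex" where
  "ext_sign S T = (-1) ^ card {(s, t). s \<in> S \<and> t \<in> T \<and> t < s}"

definition ext_mult :: "ext \<Rightarrow> ext \<Rightarrow> ext" where
  "ext_mult x y = (\<lambda>U. if finite U
      then (\<Sum>S\<in>Pow U. ext_sign S (U - S) * x S * y (U - S)) else 0)"

definition ext_zero :: ext where "ext_zero = (\<lambda>_. 0)"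

definition ext_one :: ext where "ext_one = (\<lambda>U. if U = {} then 1 else 0)"

definition gen_a :: "nat \<Rightarrow> nat \<Rightarrow> ext" where
  "gen_a i j = (\<lambda>U. if i < j then (if U = {(i, j)} then 1 else 0)
                    else if j < i then (if U = {(j, i)} then -1 else 0)
                    else 0)"

definition mat_mult :: "nat \<Rightarrow> (nat \<Rightarrow> nat \<Rightarrow> ext) \<Rightarrow> (nat \<Rightarrow> nat \<Rightarrow> ext) \<Rightarrow> (nat \<Rightarrow> nat \<Rightarrow> ext)" where
  "mat_mult n M N = (\<lambda>i k U. \<Sum>j\<in>{1..n}. ext_mult (M i j) (N j k) U)"

definition mat_id :: "nat \<Rightarrow> nat \<Rightarrow> ext" where
  "mat_id = (\<lambda>i k. if i = k then ext_one else ext_zero)"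

fun mat_pow :: "nat \<Rightarrow> (nat \<Rightarrow> nat \<Rightarrow> ext) \<Rightarrow> nat \<Rightarrow> (nat \<Rightarrow> nat \<Rightarrow> ext)" where
  "mat_pow n M 0 = mat_id"
| "mat_pow n M (Suc l) = mat_mult n (mat_pow n M l) M"

definition mat_trace :: "nat \<Rightarrow> (nat \<Rightarrow> nat \<Rightarrow> ext) \<Rightarrow> ext" where
  "mat_trace n M = (\<lambda>U. \<Sum>i\<in>{1..n}. M i i U)"

definition matA :: "nat \<Rightarrow> nat \<Rightarrow> ext" where
  "matA = (\<lambda>i j. gen_a i j)"

end

theory Submission
  imports Defs
begin

lemma sign_Un2:
  assumes "finite S" "finite T" "finite R" "T \<inter> R = {}"
  shows "ext_sign S (T \<union> R) = ext_sign S T * ext_sign S R"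
proof -
  have e: "{(s, t). s \<in> S \<and> t \<in> T \<union> R \<and> t < s} =
      {(s, t). s \<in> S \<and> t \<in> T \<and> t < s} \<union> {(s, t). s \<in> S \<and> t \<in> R \<and> t < s}" by auto
  have f1: "finite {(s, t). s \<in> S \<and> t \<in> T \<and> t < s}"
    by (rule finite_subset[of _ "S \<times> T"]) (use assms in auto)
  have f2: "finite {(s, t). s \<in> S \<and> t \<in> R \<and> t < s}"
    by (rule finite_subset[of _ "S \<times> R"]) (use assms in auto)
  show ?thesis unfolding ext_sign_def e
    using card_Un_disjoint[OF f1 f2] assms(4) by (simp add: power_add disjoint_iff)
qed

lemma sign_Un1:
  assumes "finite S" "finite T" "finite R" "S \<inter> T = {}"
  shows "ext_sign (S \<union> T) R = ext_sign S R * ext_sign T R"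
proof -
  have e: "{(s, t). s \<in> S \<union> T \<and> t \<in> R \<and> t < s} =
      {(s, t). s \<in> S \<and> t \<in> R \<and> t < s} \<union> {(s, t). s \<in> T \<and> t \<in> R \<and> t < s}" by auto
  have f1: "finite {(s, t). s \<in> S \<and> t \<in> R \<and> t < s}"
    by (rule finite_subset[of _ "S \<times> R"]) (use assms in auto)
  have f2: "finite {(s, t). s \<in> T \<and> t \<in> R \<and> t < s}"
    by (rule finite_subset[of _ "T \<times> R"]) (use assms in auto)
  show ?thesis unfolding ext_sign_def e
    using card_Un_disjoint[OF f1 f2] assms(4) by (simp add: power_add disjoint_iff)
qed

lemma sign_assoc:
  assumes "finite S" "finite T" "finite R" "S \<inter> T = {}" "S \<inter> R = {}" "T \<inter> R = {}"
  shows "ext_sign S (T \<union> R) * ext_sign T R = ext_sign (S \<union> T) R * ext_sign S T"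
  using assms by (simp add: sign_Un1 sign_Un2)

lemma sign_swap:
  assumes "finite S" "finite T" "S \<inter> T = {}"
  shows "ext_sign S T = (-1) ^ (card S * card T) * ext_sign T S"
proof -
  let ?A = "{(s, t). s \<in> S \<and> t \<in> T \<and> t < s}"
  let ?B = "{(s, t). s \<in> S \<and> t \<in> T \<and> s < t}"
  let ?C = "{(t, s). t \<in> T \<and> s \<in> S \<and> s < t}"
  have "S \<times> T = ?A \<union> ?B"
  proof -
    have "\<And>s t. s \<in> S \<Longrightarrow> t \<in> T \<Longrightarrow> s \<noteq> t" using assms(3) by auto
    then show ?thesis by (auto simp: neq_iff)
  qed
  note ST = this
  have fA: "finite ?A" by (rule finite_subset[of _ "S \<times> T"]) (use assms in auto)
  have fB: "finite ?B" by (rule finite_subset[of _ "S \<times> T"]) (use assms in auto)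
  have dAB: "?A \<inter> ?B = {}" by auto
  have "card S * card T = card (S \<times> T)" by (simp add: card_cartesian_product)
  also have "\<dots> = card (?A \<union> ?B)" by (simp only: ST)
  also have "\<dots> = card ?A + card ?B" by (rule card_Un_disjoint[OF fA fB dAB])
  finally have c: "card S * card T = card ?A + card ?B" .
  have "?C = (\<lambda>(s,t). (t,s)) ` ?B" by auto
  moreover have "inj_on (\<lambda>(s,t). (t,s)) ?B" by (auto simp: inj_on_def)
  ultimately have "card ?C = card ?B" by (simp add: card_image)
  then have "ext_sign T S = (-1) ^ card ?B" unfolding ext_sign_def by simp
  moreover have "ext_sign S T = (-1) ^ card ?A" unfolding ext_sign_def by simp
  moreover have "(-1::complex) ^ card ?A = (-1) ^ (card ?A + card ?B) * (-1) ^ card ?B"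
    by (simp add: power_add mult.assoc flip: power_mult_distrib)
  ultimately show ?thesis using c by simp
qed


lemma ext_mult_assoc: "ext_mult (ext_mult x y) z = ext_mult x (ext_mult y z)"
proof
  fix U
  show "ext_mult (ext_mult x y) z U = ext_mult x (ext_mult y z) U"
  proof (cases "finite U")
    case False then show ?thesis by (simp add: ext_mult_def)
  next
    case fin: True
    have L: "ext_mult (ext_mult x y) z U = (\<Sum>V\<in>Pow U. \<Sum>S\<in>Pow V. ext_sign V (U - V) * ext_sign S (V - S) * x S * y (V - S) * z (U - V))"
      unfolding ext_mult_def using fin
      by (auto intro!: sum.cong simp: sum_distrib_left sum_distrib_right finite_subset mult.assoc)
    also have "\<dots> = (\<Sum>(V,S)\<in>Sigma (Pow U) Pow. ext_sign V (U - V) * ext_sign S (V - S) * x S * y (V - S) * z (U - V))"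
      using fin by (subst sum.Sigma) (auto intro: finite_subset)
    also have "\<dots> = (\<Sum>(S,T)\<in>Sigma (Pow U) (\<lambda>S. Pow (U - S)). ext_sign S (U - S) * x S * (ext_sign T (U - S - T) * y T * z (U - S - T)))"
    proof (rule sum.reindex_bij_witness[where j = "\<lambda>(V,S). (S, V - S)" and i = "\<lambda>(S,T). (S \<union> T, S)"])
      fix a assume a: "a \<in> Sigma (Pow U) Pow"
      obtain V S where aa: "a = (V,S)" by (cases a)
      with a have SV: "S \<subseteq> V" "V \<subseteq> U" by auto
      then have fS: "finite S" "finite V" using fin by (auto intro: finite_subset)
      have e1: "U - S - (V - S) = U - V" using SV by auto
      have e2: "U - S = (V - S) \<union> (U - V)" "V = S \<union> (V - S)" using SV by auto
      have "ext_sign S ((V - S) \<union> (U - V)) * ext_sign (V - S) (U - V) = ext_sign (S \<union> (V - S)) (U - V) * ext_sign S (V - S)"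
        by (rule sign_assoc) (use fS fin SV in auto)
      then have "ext_sign S (U - S) * ext_sign (V - S) (U - V) = ext_sign V (U - V) * ext_sign S (V - S)"
        using e2 by metis
      then show "(case (case a of (V, S) \<Rightarrow> (S, V - S)) of (S, T) \<Rightarrow> ext_sign S (U - S) * x S * (ext_sign T (U - S - T) * y T * z (U - S - T))) =
         (case a of (V, S) \<Rightarrow> ext_sign V (U - V) * ext_sign S (V - S) * x S * y (V - S) * z (U - V))"
        unfolding aa using e1 by (simp add: algebra_simps)
    qed auto
    also have "\<dots> = (\<Sum>S\<in>Pow U. \<Sum>T\<in>Pow (U - S). ext_sign S (U - S) * x S * (ext_sign T (U - S - T) * y T * z (U - S - T)))"
      using fin by (subst sum.Sigma) (auto intro: finite_subset)
    also have "\<dots> = ext_mult x (ext_mult y z) U"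
      unfolding ext_mult_def using fin
      by (auto intro!: sum.cong simp: sum_distrib_left)
    finally show ?thesis .
  qed
qed


lemma ext_sign_empty[simp]: "ext_sign S {} = 1" "ext_sign {} S = 1"
  unfolding ext_sign_def by auto

definition homog :: "nat \<Rightarrow> ext \<Rightarrow> bool" where
  "homog p x \<longleftrightarrow> (\<forall>U. x U \<noteq> 0 \<longrightarrow> finite U \<and> card U = p)"

lemma homog_mult: assumes "homog p x" "homog q y" shows "homog (p + q) (ext_mult x y)"
  unfolding homog_def
proof (intro allI impI)
  fix U assume nz: "ext_mult x y U \<noteq> 0"
  then have fin: "finite U" by (auto simp: ext_mult_def split: if_splits)
  then have "(\<Sum>S\<in>Pow U. ext_sign S (U - S) * x S * y (U - S)) \<noteq> 0" using nz by (simp add: ext_mult_def)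
  then obtain S where S: "S \<in> Pow U" "ext_sign S (U - S) * x S * y (U - S) \<noteq> 0"
    by (meson sum.not_neutral_contains_not_neutral)
  then have "card S = p" "card (U - S) = q" using assms unfolding homog_def by auto
  moreover have "card U = card S + card (U - S)" using S(1) fin
    by (metis Pow_iff card_Diff_subset card_mono finite_subset le_add_diff_inverse)
  ultimately show "finite U \<and> card U = p + q" using fin by simp
qed

lemma homog_sum: "(\<And>j. j \<in> J \<Longrightarrow> homog p (f j)) \<Longrightarrow> homog p (\<lambda>U. \<Sum>j\<in>J. f j U)"
  unfolding homog_def by (metis (no_types, lifting) sum.neutral)

lemma homog_smul: "homog p x \<Longrightarrow> homog p (\<lambda>U. c * x U)"
  unfolding homog_def by auto

lemma homog_zero: "homog p ext_zero" unfolding homog_def ext_zero_def by auto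
lemma homog_one: "homog 0 ext_one" unfolding homog_def ext_one_def by auto
lemma homog_gen: "homog 1 (gen_a i j)" unfolding homog_def gen_a_def by auto

lemma ext_mult_comm:
  assumes "homog p x" "homog q y"
  shows "ext_mult x y U = (-1) ^ (p * q) * ext_mult y x U"
proof (cases "finite U")
  case False then show ?thesis by (simp add: ext_mult_def)
next
  case fin: True
  have "ext_mult y x U = (\<Sum>T\<in>Pow U. ext_sign T (U - T) * y T * x (U - T))"
    using fin by (simp add: ext_mult_def)
  also have "\<dots> = (\<Sum>S\<in>Pow U. ext_sign (U - S) S * y (U - S) * x S)"
    by (rule sum.reindex_bij_witness[where i = "\<lambda>S. U - S" and j = "\<lambda>S. U - S"])
       (auto simp: double_diff Diff_Diff_Int Int_absorb1)
  finally have e: "ext_mult y x U = \<dots>" .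
  have "ext_mult x y U = (\<Sum>S\<in>Pow U. (-1) ^ (p * q) * (ext_sign (U - S) S * y (U - S) * x S))"
    unfolding ext_mult_def using fin
  proof (simp, intro sum.cong refl)
    fix S assume "S \<in> Pow U"
    then have SU: "S \<subseteq> U" by auto
    show "ext_sign S (U - S) * x S * y (U - S) = (-1) ^ (p * q) * (ext_sign (U - S) S * y (U - S) * x S)"
    proof (cases "x S = 0 \<or> y (U - S) = 0")
      case True then show ?thesis by auto
    next
      case False
      then have "card S = p" "card (U - S) = q" "finite S" "finite (U - S)" using assms unfolding homog_def by auto
      then have "ext_sign S (U - S) = (-1) ^ (p * q) * ext_sign (U - S) S"
        using sign_swap[of S "U - S"] by auto
      then show ?thesis by simp
    qed
  qed
  then show ?thesis using e by (simp add: sum_distrib_left)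
qed

lemma ext_mult_sum_left: "finite J \<Longrightarrow> ext_mult (\<lambda>V. \<Sum>j\<in>J. f j V) y U = (\<Sum>j\<in>J. ext_mult (f j) y U)"
  unfolding ext_mult_def
  by (simp add: sum_distrib_left sum_distrib_right sum.swap[of _ J] mult.assoc)

lemma ext_mult_sum_right: "finite J \<Longrightarrow> ext_mult x (\<lambda>V. \<Sum>j\<in>J. f j V) U = (\<Sum>j\<in>J. ext_mult x (f j) U)"
  unfolding ext_mult_def
  by (simp add: sum_distrib_left sum_distrib_right sum.swap[of _ J] mult.assoc)

lemma ext_mult_smul_left: "ext_mult (\<lambda>V. c * x V) y U = c * ext_mult x y U"
  unfolding ext_mult_def by (simp add: sum_distrib_left algebra_simps)

lemma ext_mult_smul_right: "ext_mult x (\<lambda>V. c * y V) U = c * ext_mult x y U"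
  unfolding ext_mult_def by (simp add: sum_distrib_left algebra_simps)

lemma ext_mult_one_left: "homog p x \<Longrightarrow> ext_mult ext_one x U = x U"
proof (cases "finite U")
  case True
  then have "ext_mult ext_one x U = (\<Sum>S\<in>Pow U. ext_sign S (U-S) * ext_one S * x (U-S))" by (simp add: ext_mult_def)
  also have "\<dots> = (\<Sum>S\<in>Pow U. if S = {} then x U else 0)"
    by (rule sum.cong) (auto simp: ext_one_def)
  finally have "ext_mult ext_one x U = (\<Sum>S\<in>Pow U. if S = {} then x U else 0)" .
  then show ?thesis using True by simp
next
  case False
  assume "homog p x" then show ?thesis using False by (auto simp: ext_mult_def homog_def)
qed

lemma ext_mult_one_right: "homog p x \<Longrightarrow> ext_mult x ext_one U = x U"
proof (cases "finite U")
  case True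
  then have "ext_mult x ext_one U = (\<Sum>S\<in>Pow U. ext_sign S (U-S) * x S * ext_one (U-S))" by (simp add: ext_mult_def)
  also have "\<dots> = (\<Sum>S\<in>Pow U. if S = U then x U else 0)"
    by (rule sum.cong) (auto simp: ext_one_def)
  finally have "ext_mult x ext_one U = (\<Sum>S\<in>Pow U. if S = U then x U else 0)" .
  then show ?thesis using True by simp
next
  case False
  assume "homog p x" then show ?thesis using False by (auto simp: ext_mult_def homog_def)
qed

lemma ext_mult_zero_left: "ext_mult ext_zero x U = 0" unfolding ext_mult_def ext_zero_def by simp
lemma ext_mult_zero_right: "ext_mult x ext_zero U = 0" unfolding ext_mult_def ext_zero_def by simp


definition eqr :: "nat \<Rightarrow> (nat \<Rightarrow> nat \<Rightarrow> ext) \<Rightarrow> (nat \<Rightarrow> nat \<Rightarrow> ext) \<Rightarrow> bool" where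
  "eqr n M N \<longleftrightarrow> (\<forall>i\<in>{1..n}. \<forall>k\<in>{1..n}. M i k = N i k)"

definition mtransp :: "(nat \<Rightarrow> nat \<Rightarrow> ext) \<Rightarrow> (nat \<Rightarrow> nat \<Rightarrow> ext)" where
  "mtransp M = (\<lambda>i k. M k i)"

definition smul :: "complex \<Rightarrow> (nat \<Rightarrow> nat \<Rightarrow> ext) \<Rightarrow> (nat \<Rightarrow> nat \<Rightarrow> ext)" where
  "smul c M = (\<lambda>i k U. c * M i k U)"

lemma eqr_refl: "eqr n M M" by (simp add: eqr_def)
lemma eqr_sym: "eqr n M N \<Longrightarrow> eqr n N M" by (simp add: eqr_def)
lemma eqr_trans: "eqr n M N \<Longrightarrow> eqr n N P \<Longrightarrow> eqr n M P" by (simp add: eqr_def)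

lemma mat_assoc: "mat_mult n (mat_mult n M N) P = mat_mult n M (mat_mult n N P)"
proof (intro ext)
  fix i k U
  have "mat_mult n (mat_mult n M N) P i k U = (\<Sum>j\<in>{1..n}. \<Sum>m\<in>{1..n}. ext_mult (ext_mult (M i m) (N m j)) (P j k) U)"
    unfolding mat_mult_def by (simp add: ext_mult_sum_left)
  also have "\<dots> = (\<Sum>m\<in>{1..n}. \<Sum>j\<in>{1..n}. ext_mult (M i m) (ext_mult (N m j) (P j k)) U)"
    unfolding ext_mult_assoc by (rule sum.swap)
  also have "\<dots> = mat_mult n M (mat_mult n N P) i k U"
    unfolding mat_mult_def by (simp add: ext_mult_sum_right)
  finally show "mat_mult n (mat_mult n M N) P i k U = mat_mult n M (mat_mult n N P) i k U" .
qed

lemma mat_mult_cong: "eqr n M M' \<Longrightarrow> eqr n N N' \<Longrightarrow> eqr n (mat_mult n M N) (mat_mult n M' N')"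
  unfolding eqr_def mat_mult_def by (auto intro!: ext sum.cong)

lemma smul_cong: "eqr n M M' \<Longrightarrow> eqr n (smul c M) (smul c M')"
  unfolding eqr_def smul_def by auto

lemma mat_id_left: "(\<And>i j. homog p (M i j)) \<Longrightarrow> eqr n (mat_mult n mat_id M) M"
  unfolding eqr_def mat_mult_def mat_id_def
proof (intro ballI ext)
  fix i k U assume h: "\<And>i j. homog p (M i j)" and i: "i \<in> {1..n}" and "k \<in> {1..n}"
  have "(\<Sum>j\<in>{1..n}. ext_mult (if i = j then ext_one else ext_zero) (M j k) U)
      = (\<Sum>j\<in>{1..n}. if i = j then M i k U else 0)"
    by (rule sum.cong) (auto simp: ext_mult_one_left[OF h] ext_mult_zero_left)
  then show "(\<Sum>j\<in>{1..n}. ext_mult (if i = j then ext_one else ext_zero) (M j k) U) = M i k U"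
    using i by simp
qed

lemma mat_id_right: "(\<And>i j. homog p (M i j)) \<Longrightarrow> eqr n (mat_mult n M mat_id) M"
  unfolding eqr_def mat_mult_def mat_id_def
proof (intro ballI ext)
  fix i k U assume h: "\<And>i j. homog p (M i j)" and "i \<in> {1..n}" and k: "k \<in> {1..n}"
  have "(\<Sum>j\<in>{1..n}. ext_mult (M i j) (if j = k then ext_one else ext_zero) U)
      = (\<Sum>j\<in>{1..n}. if j = k then M i k U else 0)"
    by (rule sum.cong) (auto simp: ext_mult_one_right[OF h] ext_mult_zero_right)
  then show "(\<Sum>j\<in>{1..n}. ext_mult (M i j) (if j = k then ext_one else ext_zero) U) = M i k U"
    using k by simp
qed

lemma homog_A: "homog 1 (matA i j)" unfolding matA_def by (rule homog_gen)

lemma homog_mat_mult: "(\<And>i j. homog p (M i j)) \<Longrightarrow> (\<And>i j. homog q (N i j)) \<Longrightarrow> homog (p + q) (mat_mult n M N i k)"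
  unfolding mat_mult_def by (intro homog_sum homog_mult) auto

lemma homog_pow: "homog l (mat_pow n matA l i k)"
proof (induction l arbitrary: i k)
  case 0 then show ?case by (simp add: mat_id_def homog_one homog_zero)
next
  case (Suc l)
  then show ?case using homog_mat_mult[of l "mat_pow n matA l" 1 matA n i k] homog_A by simp
qed

lemma A_commute: "eqr n (mat_mult n matA (mat_pow n matA l)) (mat_pow n matA (Suc l))"
proof (induction l)
  case 0
  have "eqr n (mat_mult n matA mat_id) matA" by (rule mat_id_right[OF homog_A])
  moreover have "eqr n (mat_mult n mat_id matA) matA" by (rule mat_id_left[OF homog_A])
  ultimately have "eqr n (mat_mult n matA mat_id) (mat_mult n mat_id matA)"
    by (rule eqr_trans[OF _ eqr_sym])
  then show ?case by simp
next
  case (Suc l)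
  have "mat_mult n matA (mat_pow n matA (Suc l)) = mat_mult n (mat_mult n matA (mat_pow n matA l)) matA"
    by (simp add: mat_assoc)
  moreover have "eqr n (mat_mult n (mat_mult n matA (mat_pow n matA l)) matA) (mat_mult n (mat_pow n matA (Suc l)) matA)"
    by (rule mat_mult_cong[OF Suc eqr_refl])
  ultimately show ?case by simp
qed

lemma trace_cong: "eqr n M N \<Longrightarrow> mat_trace n M = mat_trace n N"
  unfolding eqr_def mat_trace_def by auto

lemma trace_rot:
  assumes "\<And>i j. homog p (M i j)" "\<And>i j. homog q (N i j)"
  shows "mat_trace n (mat_mult n M N) U = (-1) ^ (p * q) * mat_trace n (mat_mult n N M) U"
proof -
  have "mat_trace n (mat_mult n M N) U = (\<Sum>i\<in>{1..n}. \<Sum>j\<in>{1..n}. (-1) ^ (p * q) * ext_mult (N j i) (M i j) U)"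
    unfolding mat_trace_def mat_mult_def using ext_mult_comm[OF assms(1) assms(2)] by simp
  also have "\<dots> = (-1) ^ (p * q) * mat_trace n (mat_mult n N M) U"
    unfolding mat_trace_def mat_mult_def sum_distrib_left by (rule sum.swap)
  finally show ?thesis .
qed

lemma transp_mult:
  assumes "\<And>i j. homog p (M i j)" "\<And>i j. homog q (N i j)"
  shows "mtransp (mat_mult n M N) = smul ((-1) ^ (p * q)) (mat_mult n (mtransp N) (mtransp M))"
  unfolding mtransp_def smul_def mat_mult_def
  using ext_mult_comm[OF assms(1) assms(2)] by (simp add: sum_distrib_left)

lemma mat_mult_smul_left: "mat_mult n (smul c M) N = smul c (mat_mult n M N)"
  unfolding mat_mult_def smul_def by (simp add: ext_mult_smul_left sum_distrib_left)

lemma mat_mult_smul_right: "mat_mult n M (smul c N) = smul c (mat_mult n M N)"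
  unfolding mat_mult_def smul_def by (simp add: ext_mult_smul_right sum_distrib_left)

lemma smul_smul: "smul c (smul d M) = smul (c * d) M" unfolding smul_def by (simp add: mult.assoc)

lemma transp_A: "mtransp matA = smul (-1) matA"
  unfolding mtransp_def smul_def matA_def gen_a_def by (auto intro!: ext)

lemma trace_transp: "mat_trace n (mtransp M) = mat_trace n M"
  unfolding mat_trace_def mtransp_def by simp

lemma trace_smul: "mat_trace n (smul c M) U = c * mat_trace n M U"
  unfolding mat_trace_def smul_def by (simp add: sum_distrib_left)

fun sg :: "nat \<Rightarrow> complex" where
  "sg 0 = 1" | "sg (Suc m) = (-1) ^ Suc m * sg m"

lemma transp_pow: "eqr n (mtransp (mat_pow n matA l)) (smul (sg l) (mat_pow n matA l))"
proof (induction l)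
  case 0 then show ?case by (simp add: eqr_def mtransp_def smul_def mat_id_def)
next
  case (Suc m)
  have "mtransp (mat_pow n matA (Suc m)) = smul ((-1) ^ (m * 1)) (mat_mult n (mtransp matA) (mtransp (mat_pow n matA m)))"
    using transp_mult[of m "mat_pow n matA m" 1 matA n] homog_pow homog_A by simp
  also have "\<dots> = smul ((-1) ^ m * (-1)) (mat_mult n matA (mtransp (mat_pow n matA m)))"
    by (simp add: transp_A mat_mult_smul_left smul_smul)
  finally have e: "mtransp (mat_pow n matA (Suc m)) = \<dots>" .
  have "eqr n (mat_mult n matA (mtransp (mat_pow n matA m))) (mat_mult n matA (smul (sg m) (mat_pow n matA m)))"
    by (rule mat_mult_cong[OF eqr_refl Suc])
  note hh = this
  have "eqr n (mat_mult n matA (mtransp (mat_pow n matA m))) (smul (sg m) (mat_pow n matA (Suc m)))"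
    using eqr_trans[OF hh[unfolded mat_mult_smul_right] smul_cong[OF A_commute]] .
  then have "eqr n (mtransp (mat_pow n matA (Suc m))) (smul ((-1) ^ m * (-1)) (smul (sg m) (mat_pow n matA (Suc m))))"
    unfolding e by (rule smul_cong)
  then show ?case by (simp add: smul_smul mult.commute)
qed


lemma sg_4k1: "sg (4 * k + 1) = -1"
proof (induction k)
  case 0 then show ?case by simp
next
  case (Suc k)
  have "4 * Suc k + 1 = Suc (Suc (Suc (Suc (4 * k + 1))))" by simp
  then show ?case using Suc by (simp only:) (simp add: power_add)
qed

lemma trace_rot_pow: "mat_trace n (mat_pow n matA (Suc m)) U = (-1) ^ m * mat_trace n (mat_pow n matA (Suc m)) U"
proof -
  have "mat_trace n (mat_pow n matA (Suc m)) U = (-1) ^ (m * 1) * mat_trace n (mat_mult n matA (mat_pow n matA m)) U"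
    using trace_rot[of m "mat_pow n matA m" 1 matA n U] homog_pow homog_A by simp
  also have "mat_trace n (mat_mult n matA (mat_pow n matA m)) = mat_trace n (mat_pow n matA (Suc m))"
    by (rule trace_cong[OF A_commute])
  finally show ?thesis by simp
qed

lemma trace_transp_pow: "mat_trace n (mat_pow n matA l) U = sg l * mat_trace n (mat_pow n matA l) U"
proof -
  have "mat_trace n (mat_pow n matA l) U = mat_trace n (mtransp (mat_pow n matA l)) U"
    by (simp add: trace_transp)
  also have "\<dots> = mat_trace n (smul (sg l) (mat_pow n matA l)) U"
    by (simp add: trace_cong[OF transp_pow])
  finally show ?thesis by (simp add: trace_smul)
qed

theorem proposition4p4:
  fixes n l :: nat
  assumes "l \<ge> 1" and "l mod 4 \<noteq> 3"
  shows "mat_trace n (mat_pow n matA l) = ext_zero"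
proof
  fix U
  have "mat_trace n (mat_pow n matA l) U = 0"
  proof (cases "even l")
    case True
    obtain m where m: "l = Suc m" using assms(1) by (cases l) auto
    with True have "odd m" by simp
    then show ?thesis using trace_rot_pow[of n m U] m by simp
  next
    case False
    then have "l mod 4 = 1" using assms(2) by presburger
    then have "l = 4 * (l div 4) + 1" using div_mult_mod_eq[of l 4] by simp
    then obtain k where "l = 4 * k + 1" by blast
    then have "sg l = -1" using sg_4k1 by simp
    then show ?thesis using trace_transp_pow[of n l U] by simp
  qed
  then show "mat_trace n (mat_pow n matA l) U = ext_zero U" by (simp add: ext_zero_def)
qed

end
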